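(* Let $m\ge 0$ be an integer and let $n,N$ be complex numbers such that $N\notin\{0,-1,\dots,-m\}$ and neither $n-m$ nor $1-N-m+n$ belongs to $\{0,-1,\dots,-(m-1)\}$. Then $$(-1)^m\frac{(m+1)\,(n-m)_m\,(N-n)_m}{m!\,(N)_{m+1}}\;{}_3F_2\!\left(\begin{matrix}-m,\ n+1,\ 1-N+n\\ n-m,\ 1-N-m+n\end{matrix};1\right)=\frac{(m+1)^2}{N}\;{}_3F_2\!\left(\begin{matrix}-m,\ n+1,\ m+2\\ 2,\ N+1\end{matrix};1\right).$$
   Context: $(a)_k=a(a+1)\cdots(a+k-1)$ is the Pochhammer symbol, $(a)_0=1$. ${}_3F_2\!\left(\begin{matrix}-m,a_2,a_3\\ b_1,b_2\end{matrix};1\right)=\sum_{k=0}^{m}\frac{(-m)_k(a_2)_k(a_3)_k}{(b_1)_k(b_2)_k\,k!}$ (terminating sum). *)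

theory Defs
  imports Complex_Main
begin

definition hyp3F2_term :: "nat \<Rightarrow> complex \<Rightarrow> complex \<Rightarrow> complex \<Rightarrow> complex \<Rightarrow> complex" where
  "hyp3F2_term m a2 a3 b1 b2 =
     (\<Sum>k=0..m. pochhammer (- of_nat m) k * pochhammer a2 k * pochhammer a3 k /
                 (pochhammer b1 k * pochhammer b2 k * of_nat (fact k)))"

end

theory Submission
  imports Defs "HOL-Computational_Algebra.Formal_Power_Series"
begin

lemma poch_negnat_zero:
  assumes "k < j" shows "pochhammer (- of_nat k :: complex) j = 0"
  using assms by (auto simp: pochhammer_eq_0_iff)

lemma term_id:
  fixes a d :: complex
  assumes dnz: "pochhammer d (j + l) \<noteq> 0" and jm: "j \<le> m"
  shows "pochhammer (- of_nat m) (j + l) * pochhammer a (j + l) / (pochhammer d (j + l) * fact (j + l)) * pochhammer (- of_nat (j + l)) j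
    = ((-1)^j * pochhammer (- of_nat m) j * pochhammer a j / pochhammer d j) *
      (pochhammer (a + of_nat j) l * pochhammer (- of_nat (m - j)) l / (fact l * pochhammer (d + of_nat j) l))"
proof -
  have p1: "pochhammer (- of_nat m :: complex) (j + l) = pochhammer (- of_nat m) j * pochhammer (- of_nat (m - j)) l"
    using jm by (simp add: pochhammer_product' of_nat_diff)
  have p2: "pochhammer a (j + l) = pochhammer a j * pochhammer (a + of_nat j) l"
    by (simp add: pochhammer_product')
  have p3: "pochhammer d (j + l) = pochhammer d j * pochhammer (d + of_nat j) l"
    by (simp add: pochhammer_product')
  have p4: "(fact (j + l) :: complex) = fact l * pochhammer (of_nat l + 1) j"
    using pochhammer_product'[of "1::complex" l j] by (simp add: pochhammer_fact add.commute)
  have p5: "pochhammer (- of_nat (j + l) :: complex) j = (-1)^j * pochhammer (of_nat l + 1) j"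
    by (subst pochhammer_minus) (simp add: algebra_simps)
  have nz1: "pochhammer (of_nat l + 1 :: complex) j \<noteq> 0"
  proof -
    have "of_nat l + 1 \<noteq> - (of_nat k :: complex)" for k
    proof
      assume eq: "of_nat l + 1 = - (of_nat k :: complex)"
      have "(of_nat (l + 1 + k) :: complex) = of_nat l + 1 + of_nat k" by simp
      also have "\<dots> = 0" using eq by simp
      finally show False by (simp only: of_nat_eq_0_iff)
    qed
    then show ?thesis by (simp add: pochhammer_eq_0_iff)
  qed
  have nz2: "pochhammer d j \<noteq> 0" "pochhammer (d + of_nat j) l \<noteq> 0" using dnz p3 by auto
  show ?thesis unfolding p1 p2 p3 p4 p5 using nz1 nz2
    by (simp add: field_simps)
qed

lemma V1:
  fixes b e :: complex
  assumes he: "\<forall>i<m. e \<noteq> - of_nat i" and km: "k \<le> m"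
  shows "pochhammer b k / pochhammer e k =
     (\<Sum>j=0..m. pochhammer (e - b) j * pochhammer (- of_nat k) j / (fact j * pochhammer e j))"
proof -
  have "(\<Sum>j=0..k. pochhammer (e - b) j * pochhammer (- of_nat k) j / (of_nat (fact j) * pochhammer e j))
        = pochhammer (e - (e - b)) k / pochhammer e k"
    by (rule Vandermonde_pochhammer) (use he km in auto)
  then have 1: "pochhammer b k / pochhammer e k = (\<Sum>j=0..k. pochhammer (e - b) j * pochhammer (- of_nat k) j / (fact j * pochhammer e j))"
    by simp
  have "(\<Sum>j=0..m. pochhammer (e - b) j * pochhammer (- of_nat k) j / (fact j * pochhammer e j))
      = (\<Sum>j=0..k. pochhammer (e - b) j * pochhammer (- of_nat k) j / (fact j * pochhammer e j))"
    by (rule sum.mono_neutral_right) (use km in \<open>auto simp: poch_negnat_zero\<close>)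
  with 1 show ?thesis by simp
qed

lemma V2:
  fixes a d :: complex
  assumes hd: "\<forall>i<m. d \<noteq> - of_nat i" and jm: "j \<le> m"
  shows "(\<Sum>k=0..m. pochhammer (- of_nat m) k * pochhammer a k / (pochhammer d k * fact k) * pochhammer (- of_nat k) j)
    = (-1)^j * pochhammer (- of_nat m) j * pochhammer a j * pochhammer (d - a) (m - j) / pochhammer d m"
proof -
  let ?f = "\<lambda>k. pochhammer (- of_nat m) k * pochhammer a k / (pochhammer d k * fact k) * pochhammer (- of_nat k :: complex) j"
  let ?C = "(-1)^j * pochhammer (- of_nat m) j * pochhammer a j / pochhammer d j"
  have dm: "pochhammer d m \<noteq> 0" using hd by (auto simp: pochhammer_eq_0_iff)
  have dsplit: "pochhammer d m = pochhammer d j * pochhammer (d + of_nat j) (m - j)"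
    using jm by (simp add: pochhammer_product)
  have "(\<Sum>k=0..m. ?f k) = (\<Sum>k=j..m. ?f k)"
    by (rule sum.mono_neutral_right) (auto simp: poch_negnat_zero)
  also have "\<dots> = (\<Sum>l=0..m-j. ?f (j + l))"
    using jm by (subst sum.atLeastAtMost_shift_0[OF jm]) (simp add: comp_def)
  also have "\<dots> = (\<Sum>l=0..m-j. ?C * (pochhammer (a + of_nat j) l * pochhammer (- of_nat (m - j)) l / (fact l * pochhammer (d + of_nat j) l)))"
  proof (rule sum.cong[OF refl])
    fix l assume "l \<in> {0..m-j}"
    then have "j + l \<le> m" using jm by auto
    then have "pochhammer d (j + l) \<noteq> 0" using dm pochhammer_neq_0_mono by blast
    then show "?f (j + l) = ?C * (pochhammer (a + of_nat j) l * pochhammer (- of_nat (m - j)) l / (fact l * pochhammer (d + of_nat j) l))"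
      using term_id[OF _ jm] by simp
  qed
  also have "\<dots> = ?C * (\<Sum>l=0..m-j. pochhammer (a + of_nat j) l * pochhammer (- of_nat (m - j)) l / (of_nat (fact l) * pochhammer (d + of_nat j) l))"
    by (simp add: sum_distrib_left)
  also have "(\<Sum>l=0..m-j. pochhammer (a + of_nat j) l * pochhammer (- of_nat (m - j)) l / (of_nat (fact l) * pochhammer (d + of_nat j) l))
      = pochhammer (d + of_nat j - (a + of_nat j)) (m - j) / pochhammer (d + of_nat j) (m - j)"
  proof (rule Vandermonde_pochhammer, intro ballI)
    fix i assume "i \<in> {0..<m-j}"
    then have "i + j < m" by auto
    then have "d \<noteq> - of_nat (i + j)" using hd by blast
    then show "d + of_nat j \<noteq> - of_nat i" by (auto simp: algebra_simps)
  qed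
  finally show ?thesis using dm unfolding dsplit by (simp add: field_simps)
qed

lemma revpoch:
  fixes a d :: complex
  assumes jm: "j \<le> m" and nz: "pochhammer (1 + a - d - of_nat m) j \<noteq> 0"
  shows "(-1)^j * pochhammer (d - a) (m - j) = pochhammer (d - a) m / pochhammer (1 + a - d - of_nat m) j"
proof -
  have 1: "pochhammer (d - a) m = pochhammer (d - a) (m - j) * pochhammer (d - a + of_nat (m - j)) j"
    using pochhammer_product'[of "d - a" "m - j" j] jm by simp
  have 2: "pochhammer (1 + a - d - of_nat m) j = (-1)^j * pochhammer (d - a + of_nat (m - j)) j"
    using pochhammer_minus'[of "a - d - of_nat m + of_nat j" j] jm by (simp add: of_nat_diff algebra_simps)
  show ?thesis using nz unfolding 1 2 by (simp add: field_simps)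
qed

lemma T:
  fixes a b d e :: complex
  assumes he: "\<forall>i<m. e \<noteq> - of_nat i" and hd: "\<forall>i<m. d \<noteq> - of_nat i"
    and hf: "\<forall>i<m. 1 + a - d - of_nat m \<noteq> - of_nat i"
  shows "hyp3F2_term m a b d e = pochhammer (d - a) m / pochhammer d m * hyp3F2_term m a (e - b) e (1 + a - d - of_nat m)"
proof -
  define A where "A k = pochhammer (- of_nat m) k * pochhammer a k / (pochhammer d k * fact k)" for k
  define B where "B j = pochhammer (e - b) j / (fact j * pochhammer e j)" for j
  have dnz: "pochhammer d k \<noteq> 0" if "k \<le> m" for k using hd that by (auto simp: pochhammer_eq_0_iff)
  have enz: "pochhammer e k \<noteq> 0" if "k \<le> m" for k using he that by (auto simp: pochhammer_eq_0_iff)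
  have fnz: "pochhammer (1 + a - d - of_nat m) k \<noteq> 0" if "k \<le> m" for k using hf that by (auto simp: pochhammer_eq_0_iff)
  have "hyp3F2_term m a b d e = (\<Sum>k=0..m. A k * (pochhammer b k / pochhammer e k))"
    unfolding hyp3F2_term_def A_def by (rule sum.cong[OF refl]) (simp add: field_simps)
  also have "\<dots> = (\<Sum>k=0..m. \<Sum>j=0..m. B j * (A k * pochhammer (- of_nat k) j))"
    by (rule sum.cong[OF refl]) (simp add: V1[OF he] B_def sum_distrib_left field_simps)
  also have "\<dots> = (\<Sum>j=0..m. B j * (\<Sum>k=0..m. A k * pochhammer (- of_nat k) j))"
    by (subst sum.swap) (simp add: sum_distrib_left)
  also have "\<dots> = (\<Sum>j=0..m. B j * ((-1)^j * pochhammer (- of_nat m) j * pochhammer a j * pochhammer (d - a) (m - j) / pochhammer d m))"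
    by (rule sum.cong[OF refl]) (use V2[OF hd] in \<open>simp add: A_def\<close>)
  also have "\<dots> = (\<Sum>j=0..m. B j * (pochhammer (- of_nat m) j * pochhammer a j / pochhammer d m * ((-1)^j * pochhammer (d - a) (m - j))))"
    by (rule sum.cong[OF refl]) (simp add: field_simps)
  also have "\<dots> = (\<Sum>j=0..m. B j * (pochhammer (- of_nat m) j * pochhammer a j / pochhammer d m * (pochhammer (d - a) m / pochhammer (1 + a - d - of_nat m) j)))"
    by (rule sum.cong[OF refl]) (use revpoch fnz in simp)
  also have "\<dots> = pochhammer (d - a) m / pochhammer d m * hyp3F2_term m a (e - b) e (1 + a - d - of_nat m)"
    unfolding hyp3F2_term_def B_def sum_distrib_left
    by (rule sum.cong[OF refl]) (simp add: field_simps)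
  finally show ?thesis .
qed

lemma hyp_swap: "hyp3F2_term m a b d e = hyp3F2_term m a b e d"
  unfolding hyp3F2_term_def by (simp add: mult_ac)

theorem mainTheorem2:
  fixes m :: nat and n N :: complex
  assumes "\<forall>j\<in>{0..m}. N \<noteq> - of_nat j"
    and "\<forall>j\<in>{0..<m}. n - of_nat m \<noteq> - of_nat j"
    and "\<forall>j\<in>{0..<m}. 1 - N - of_nat m + n \<noteq> - of_nat j"
  shows "(-1) ^ m * (of_nat (m + 1) * pochhammer (n - of_nat m) m * pochhammer (N - n) m
            / (of_nat (fact m) * pochhammer N (m + 1)))
          * hyp3F2_term m (n + 1) (1 - N + n) (n - of_nat m) (1 - N - of_nat m + n)
       = (of_nat (m + 1))^2 / N * hyp3F2_term m (n + 1) (of_nat m + 2) 2 (N + 1)"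
proof -
  note h1 = assms(1) and h2 = assms(2) and h3 = assms(3)
  have N0: "N \<noteq> 0" using h1 by force
  have e1: "\<forall>i<m. N + 1 \<noteq> - of_nat i"
  proof (intro allI impI)
    fix i assume "i < m"
    then have ne: "N \<noteq> - of_nat (i + 1)" proof -
      have "i + 1 \<in> {0..m}" using \<open>i < m\<close> by simp
      then show ?thesis using h1 by blast
    qed
    show "N + 1 \<noteq> - of_nat i"
    proof
      assume "N + 1 = - of_nat i"
      then have "N = - of_nat i - 1" by (simp add: eq_diff_eq)
      also have "\<dots> = - of_nat (i + 1)" by simp
      finally show False using ne by blast
    qed
  qed
  have d1: "\<forall>i<m. (2::complex) \<noteq> - of_nat i"
  proof (intro allI impI)
    fix i :: nat
    show "(2::complex) \<noteq> - of_nat i"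
    proof
      assume "(2::complex) = - of_nat i"
      then have "(2::complex) + of_nat i = 0" by (simp only: eq_neg_iff_add_eq_0)
      then have "(of_nat (2 + i) :: complex) = 0" by (simp only: of_nat_add of_nat_numeral)
      then show False by (simp only: of_nat_eq_0_iff)
    qed
  qed
  have f1: "\<forall>i<m. 1 + (n + 1) - 2 - of_nat m \<noteq> - (of_nat i :: complex)"
    using h2 by (auto simp: algebra_simps)
  have step1: "hyp3F2_term m (n + 1) (of_nat m + 2) 2 (N + 1)
     = pochhammer (2 - (n + 1)) m / pochhammer 2 m * hyp3F2_term m (n + 1) (N + 1 - (of_nat m + 2)) (N + 1) (1 + (n + 1) - 2 - of_nat m)"
    by (rule T[OF e1 d1 f1])
  have e2: "\<forall>i<m. 1 + (n + 1) - 2 - of_nat m \<noteq> - (of_nat i :: complex)" by (rule f1)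
  have f2: "\<forall>i<m. 1 + (n + 1) - (N + 1) - of_nat m \<noteq> - (of_nat i :: complex)"
    using h3 by (auto simp: algebra_simps)
  have step2: "hyp3F2_term m (n + 1) (N + 1 - (of_nat m + 2)) (N + 1) (1 + (n + 1) - 2 - of_nat m)
     = pochhammer (N + 1 - (n + 1)) m / pochhammer (N + 1) m * hyp3F2_term m (n + 1) ((1 + (n + 1) - 2 - of_nat m) - (N + 1 - (of_nat m + 2))) (1 + (n + 1) - 2 - of_nat m) (1 + (n + 1) - (N + 1) - of_nat m)"
    using T[OF e2 e1 f2, of "N + 1 - (of_nat m + 2)"] hyp_swap by metis
  have args: "(n - of_nat m) - (N + 1 - (of_nat m + 2)) = 1 - N + n"
     "1 + (n + 1) - 2 - of_nat m = n - of_nat m"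
     "1 + (n + 1) - (N + 1) - of_nat m = 1 - N - of_nat m + n"
     "N + 1 - (n + 1) = N - n" "2 - (n + 1) = 1 - n"
    by (simp_all add: algebra_simps)
  define F where "F = hyp3F2_term m (n + 1) (1 - N + n) (n - of_nat m) (1 - N - of_nat m + n)"
  have R: "hyp3F2_term m (n + 1) (of_nat m + 2) 2 (N + 1) = pochhammer (1 - n) m / pochhammer 2 m * (pochhammer (N - n) m / pochhammer (N + 1) m * F)"
  proof -
    have R0: "hyp3F2_term m (n + 1) (of_nat m + 2) 2 (N + 1) = pochhammer (2 - (n + 1)) m / pochhammer 2 m * (pochhammer (N + 1 - (n + 1)) m / pochhammer (N + 1) m * hyp3F2_term m (n + 1) ((1 + (n + 1) - 2 - of_nat m) - (N + 1 - (of_nat m + 2))) (1 + (n + 1) - 2 - of_nat m) (1 + (n + 1) - (N + 1) - of_nat m))"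
      using step1 step2 by (simp only:)
    then show ?thesis by (simp only: args F_def)
  qed
  have p2: "pochhammer (2::complex) m = of_nat (m + 1) * fact m"
  proof -
    have "(fact (Suc m) :: complex) = pochhammer 1 (Suc m)" by (rule pochhammer_fact)
    also have "\<dots> = pochhammer 2 m" by (simp add: pochhammer_rec)
    finally show ?thesis by (simp add: algebra_simps)
  qed
  have pN: "pochhammer N (m + 1) = N * pochhammer (N + 1) m" by (simp add: pochhammer_rec)
  have pn: "pochhammer (n - of_nat m) m = (-1)^m * pochhammer (1 - n) m"
    using pochhammer_minus'[of "n - 1" m] by (simp add: algebra_simps)
  have nzN1: "pochhammer (N + 1) m \<noteq> 0" using e1 by (auto simp: pochhammer_eq_0_iff)
  show ?thesis
  proof -
    define c where "c = (of_nat (m + 1) :: complex)"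
    have c0: "c \<noteq> 0" unfolding c_def by (simp only: of_nat_eq_0_iff)
    have fm: "(fact m :: complex) \<noteq> 0" by simp
    have ef: "(of_nat (fact m) :: complex) = fact m" by simp
    show ?thesis
      unfolding R F_def[symmetric] p2 pN pn c_def[symmetric] ef using N0 nzN1 c0 fm
      by (simp add: field_simps power2_eq_square)
  qed
qed

end
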